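(* Let $(t,\eta,\mu)$ be a polynomial monad, i.e. a monoid in $(\mathbf{Poly},\mathcal{y},\triangleleft)$. For sets $A,B$ put $h^t_{A,B}:=[A\mathcal{y},\, t\triangleleft B\mathcal{y}]\in\mathbf{Poly}$. Then the Kleisli category $\mathbf{Set}_t$ is enriched in $(\mathbf{Poly},\mathcal{y},\otimes)$: there is a $(\mathbf{Poly},\mathcal{y},\otimes)$-enriched category whose objects are sets, whose hom-objects are the polynomials $h^t_{A,B}$ (with identities induced by $A\mathcal{y}\cong\mathcal{y}\triangleleft A\mathcal{y}\xrightarrow{\eta\triangleleft A\mathcal{y}} t\triangleleft A\mathcal{y}$ and a unital, associative composition $h^t_{A,B}\otimes h^t_{B,C}\to h^t_{A,C}$), and whose underlying ordinary category (obtained by applying $\mathbf{Poly}(\mathcal{y},-)$ to hom-objects) is $\mathbf{Set}_t$; in particular $\mathbf{Poly}(\mathcal{y},h^t_{A,B})\cong\mathbf{Set}_t(A,B)$.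
   Context: $\mathbf{Poly}$ is the category of polynomial functors $\mathbf{Set}\to\mathbf{Set}$, i.e. functors of the form $p=\sum_{i\in p(1)}\mathcal{y}^{p[i]}$ where $\mathcal{y}^X=\mathrm{Hom}_{\mathbf{Set}}(X,-)$, with natural transformations as morphisms. $\triangleleft$ denotes composition of polynomial functors ($p\triangleleft q = p\circ q$, unit $\mathcal{y}$); $\otimes$ is the Dirichlet (parallel) product $p\otimes q=\sum_{(i,j)\in p(1)\times q(1)}\mathcal{y}^{p[i]\times q[j]}$ with unit $\mathcal{y}$; $[-,-]$ denotes the internal hom of $(\mathbf{Poly},\otimes)$, so maps $r\otimes p\to q$ correspond to maps $r\to[p,q]$. For a set $A$, $A\mathcal{y}=\sum_{a\in A}\mathcal{y}$. The Kleisli category $\mathbf{Set}_t$ has sets as objects and functions $A\to t(B)$ as morphisms $A\to B$. For a monoidal category $(V,I,\otimes)$, a category $\mathcal{C}$ is said to be enriched in $V$ if there is a $V$-enriched category whose underlying category, obtained by applying the lax monoidal functor $V(I,-)\colon V\to\mathbf{Set}$ to hom-objects, is $\mathcal{C}$. *)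

theory Defs
  imports "HOL-Library.FuncSet"
begin

text \<open>A polynomial p = sum over i in p(1) of y^(p[i]) is represented by its set of
positions p(1) and its family of direction sets p[i].  A morphism p -> q is a
map on positions together with, for each position i, a backwards map
q[phi_1 i] -> p[i] on directions.\<close>

type_synonym ('p,'d) poly = "'p set \<times> ('p \<Rightarrow> 'd set)"
type_synonym ('p,'d,'q,'e) pmor = "('p \<Rightarrow> 'q) \<times> ('p \<Rightarrow> 'e \<Rightarrow> 'd)"

definition pos :: "('p,'d) poly \<Rightarrow> 'p set" where "pos p = fst p"
definition dir :: "('p,'d) poly \<Rightarrow> 'p \<Rightarrow> 'd set" where "dir p = snd p"

definition is_pmor :: "('p,'d) poly \<Rightarrow> ('q,'e) poly \<Rightarrow> ('p,'d,'q,'e) pmor \<Rightarrow> bool" where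
  "is_pmor p q \<phi> \<longleftrightarrow>
     (\<forall>i\<in>pos p. fst \<phi> i \<in> pos q \<and> (\<forall>e\<in>dir q (fst \<phi> i). snd \<phi> i e \<in> dir p i))"

definition pmor_eq :: "('p,'d) poly \<Rightarrow> ('q,'e) poly \<Rightarrow> ('p,'d,'q,'e) pmor \<Rightarrow> ('p,'d,'q,'e) pmor \<Rightarrow> bool" where
  "pmor_eq p q \<phi> \<psi> \<longleftrightarrow>
     (\<forall>i\<in>pos p. fst \<phi> i = fst \<psi> i \<and> (\<forall>e\<in>dir q (fst \<phi> i). snd \<phi> i e = snd \<psi> i e))"

text \<open>Diagrammatic composition: first phi, then psi.\<close>
definition pmor_comp :: "('p,'d,'q,'e) pmor \<Rightarrow> ('q,'e,'r,'f) pmor \<Rightarrow> ('p,'d,'r,'f) pmor" where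
  "pmor_comp \<phi> \<psi> = (\<lambda>i. fst \<psi> (fst \<phi> i), \<lambda>i x. snd \<phi> i (snd \<psi> (fst \<phi> i) x))"

definition pid :: "('p,'d,'p,'d) pmor" where "pid = (\<lambda>i. i, \<lambda>i d. d)"

text \<open>The polynomial y, and A y = sum over a in A of y.\<close>
definition yy :: "(unit, unit) poly" where "yy = ({()}, \<lambda>_. {()})"
definition linear :: "'a set \<Rightarrow> ('a, unit) poly" where "linear A = (A, \<lambda>_. {()})"

definition dtensor :: "('p,'d) poly \<Rightarrow> ('q,'e) poly \<Rightarrow> ('p \<times> 'q, 'd \<times> 'e) poly" where
  "dtensor p q = (pos p \<times> pos q, \<lambda>(i,j). dir p i \<times> dir q j)"

definition dtensor_mor :: "('p,'d,'p2,'d2) pmor \<Rightarrow> ('q,'e,'q2,'e2) pmor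
    \<Rightarrow> ('p \<times> 'q, 'd \<times> 'e, 'p2 \<times> 'q2, 'd2 \<times> 'e2) pmor" where
  "dtensor_mor \<phi> \<psi> = (\<lambda>(i,j). (fst \<phi> i, fst \<psi> j), \<lambda>(i,j) (d,e). (snd \<phi> i d, snd \<psi> j e))"

definition dassoc :: "(('p \<times> 'q) \<times> 'r, ('d \<times> 'e) \<times> 'f, 'p \<times> ('q \<times> 'r), 'd \<times> ('e \<times> 'f)) pmor" where
  "dassoc = (\<lambda>((i,j),k). (i,(j,k)), \<lambda>_ (d,(e,f)). ((d,e),f))"

definition dlunit :: "(unit \<times> 'p, unit \<times> 'd, 'p, 'd) pmor" where
  "dlunit = (\<lambda>(u,i). i, \<lambda>_ d. ((),d))"

definition drunit :: "('p \<times> unit, 'd \<times> unit, 'p, 'd) pmor" where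
  "drunit = (\<lambda>(i,u). i, \<lambda>_ d. (d,()))"

definition ydiag :: "(unit, unit, unit \<times> unit, unit \<times> unit) pmor" where
  "ydiag = (\<lambda>_. ((),()), \<lambda>_ _. ())"

definition ctri :: "('p,'d) poly \<Rightarrow> ('q,'e) poly \<Rightarrow> ('p \<times> ('d \<Rightarrow> 'q), 'd \<times> 'e) poly" where
  "ctri p q = (Sigma (pos p) (\<lambda>i. dir p i \<rightarrow>\<^sub>E pos q),
               \<lambda>(i,f). Sigma (dir p i) (\<lambda>d. dir q (f d)))"

text \<open>phi \<triangleleft> psi : p \<triangleleft> q -> p' \<triangleleft> q', where p' is the codomain of phi.\<close>
definition ctri_mor :: "('p2,'d2) poly \<Rightarrow> ('p,'d,'p2,'d2) pmor \<Rightarrow> ('q,'e,'q2,'e2) pmor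
    \<Rightarrow> ('p \<times> ('d \<Rightarrow> 'q), 'd \<times> 'e, 'p2 \<times> ('d2 \<Rightarrow> 'q2), 'd2 \<times> 'e2) pmor" where
  "ctri_mor p2 \<phi> \<psi> =
     (\<lambda>(i,f). (fst \<phi> i, restrict (\<lambda>d2. fst \<psi> (f (snd \<phi> i d2))) (dir p2 (fst \<phi> i))),
      \<lambda>(i,f) (d2,e2). (snd \<phi> i d2, snd \<psi> (f (snd \<phi> i d2)) e2))"

definition tri_lunit :: "(unit \<times> (unit \<Rightarrow> 'p), unit \<times> 'd, 'p, 'd) pmor" where
  "tri_lunit = (\<lambda>(u,f). f (), \<lambda>_ d. ((),d))"

definition tri_lunit_inv :: "('p, 'd, unit \<times> (unit \<Rightarrow> 'p), unit \<times> 'd) pmor" where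
  "tri_lunit_inv = (\<lambda>i. ((), restrict (\<lambda>_. i) {()}), \<lambda>_ (u,d). d)"

definition tri_runit :: "('p \<times> ('d \<Rightarrow> unit), 'd \<times> unit, 'p, 'd) pmor" where
  "tri_runit = (\<lambda>(i,f). i, \<lambda>_ d. (d,()))"

definition tri_assoc :: "('p,'d) poly \<Rightarrow> ('q,'e) poly \<Rightarrow>
   (('p \<times> ('d \<Rightarrow> 'q)) \<times> ('d \<times> 'e \<Rightarrow> 'r), ('d \<times> 'e) \<times> 'f,
    'p \<times> ('d \<Rightarrow> 'q \<times> ('e \<Rightarrow> 'r)), 'd \<times> ('e \<times> 'f)) pmor" where
  "tri_assoc p q =
     (\<lambda>((i,f),g). (i, restrict (\<lambda>d. (f d, restrict (\<lambda>e. g (d,e)) (dir q (f d)))) (dir p i)),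
      \<lambda>_ (d,(e,x)). ((d,e),x))"

definition poly_monad ::
  "('i,'d) poly \<Rightarrow> (unit, unit, 'i, 'd) pmor \<Rightarrow> ('i \<times> ('d \<Rightarrow> 'i), 'd \<times> 'd, 'i, 'd) pmor \<Rightarrow> bool" where
  "poly_monad t \<eta> \<mu> \<longleftrightarrow>
     is_pmor yy t \<eta> \<and> is_pmor (ctri t t) t \<mu> \<and>
     pmor_eq (ctri yy t) t (pmor_comp (ctri_mor t \<eta> pid) \<mu>) tri_lunit \<and>
     pmor_eq (ctri t yy) t (pmor_comp (ctri_mor t pid \<eta>) \<mu>) tri_runit \<and>
     pmor_eq (ctri (ctri t t) t) t
       (pmor_comp (ctri_mor t \<mu> pid) \<mu>)
       (pmor_comp (tri_assoc t t) (pmor_comp (ctri_mor t pid \<mu>) \<mu>))"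

text \<open>[p,q] = sum over phi : p -> q of y^(sum over i in p(1) of q[phi_1 i]).
Morphisms are taken in canonical (extensional) form so that each morphism is
represented by exactly one position.\<close>
definition canon :: "('p,'d) poly \<Rightarrow> ('q,'e) poly \<Rightarrow> ('p,'d,'q,'e) pmor \<Rightarrow> ('p,'d,'q,'e) pmor" where
  "canon p q \<phi> = (restrict (fst \<phi>) (pos p),
                  \<lambda>i. if i \<in> pos p then restrict (snd \<phi> i) (dir q (fst \<phi> i)) else undefined)"

definition homset :: "('p,'d) poly \<Rightarrow> ('q,'e) poly \<Rightarrow> ('p,'d,'q,'e) pmor set" where
  "homset p q = {\<phi>. is_pmor p q \<phi> \<and> canon p q \<phi> = \<phi>}"

definition ihom :: "('p,'d) poly \<Rightarrow> ('q,'e) poly \<Rightarrow> (('p,'d,'q,'e) pmor, 'p \<times> 'e) poly" where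
  "ihom p q = (homset p q, \<lambda>\<phi>. Sigma (pos p) (\<lambda>i. dir q (fst \<phi> i)))"

definition hT :: "('i,'d) poly \<Rightarrow> 'a set \<Rightarrow> 'a set \<Rightarrow>
   (('a, unit, 'i \<times> ('d \<Rightarrow> 'a), 'd \<times> unit) pmor, 'a \<times> ('d \<times> unit)) poly" where
  "hT t A B = ihom (linear A) (ctri t (linear B))"

definition enr_id :: "('i,'d) poly \<Rightarrow> (unit, unit, 'i, 'd) pmor \<Rightarrow> 'a set \<Rightarrow>
   (unit, unit, ('a, unit, 'i \<times> ('d \<Rightarrow> 'a), 'd \<times> unit) pmor, 'a \<times> ('d \<times> unit)) pmor" where
  "enr_id t \<eta> A =
     (\<lambda>_. canon (linear A) (ctri t (linear A)) (pmor_comp tri_lunit_inv (ctri_mor t \<eta> pid)),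
      \<lambda>_ _. ())"

text \<open>t(B) is the set of positions of t \<triangleleft> B y; Set_t(A,B) is the set of
(extensional) functions A -> t(B).\<close>
definition tset :: "('i,'d) poly \<Rightarrow> 'a set \<Rightarrow> ('i \<times> ('d \<Rightarrow> 'a)) set" where
  "tset t B = pos (ctri t (linear B))"

definition kl_hom :: "('i,'d) poly \<Rightarrow> 'a set \<Rightarrow> 'a set \<Rightarrow> ('a \<Rightarrow> 'i \<times> ('d \<Rightarrow> 'a)) set" where
  "kl_hom t A B = A \<rightarrow>\<^sub>E tset t B"

definition kl_unit :: "('i,'d) poly \<Rightarrow> (unit, unit, 'i, 'd) pmor \<Rightarrow> 'a set \<Rightarrow> 'a \<Rightarrow> 'i \<times> ('d \<Rightarrow> 'a)" where
  "kl_unit t \<eta> A = (\<lambda>a\<in>A. (fst \<eta> (), \<lambda>d\<in>dir t (fst \<eta> ()). a))"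

text \<open>Kleisli composition of f : A -> t(B) and g : B -> t(C): mu_C o t(g) o f.\<close>
definition kl_comp :: "('i,'d) poly \<Rightarrow> ('i \<times> ('d \<Rightarrow> 'i), 'd \<times> 'd, 'i, 'd) pmor \<Rightarrow> 'a set
    \<Rightarrow> ('a \<Rightarrow> 'i \<times> ('d \<Rightarrow> 'a)) \<Rightarrow> ('a \<Rightarrow> 'i \<times> ('d \<Rightarrow> 'a)) \<Rightarrow> 'a \<Rightarrow> 'i \<times> ('d \<Rightarrow> 'a)" where
  "kl_comp t \<mu> A f g =
     (\<lambda>a\<in>A. let i = fst (f a); \<phi> = snd (f a);
                 \<psi> = restrict (\<lambda>d. fst (g (\<phi> d))) (dir t i);
                 k = fst \<mu> (i, \<psi>)
             in (k, \<lambda>d'\<in>dir t k. (case snd \<mu> (i, \<psi>) d' of (d, e) \<Rightarrow> snd (g (\<phi> d)) e)))"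

text \<open>Poly(y, h) identified with positions; the underlying map to Set_t
sends x : y -> h^t_{A,B} to the function A -> t(B) of its position.\<close>
definition under :: "(unit, unit, ('a, unit, 'q, 'e) pmor, 'x) pmor \<Rightarrow> 'a \<Rightarrow> 'q" where
  "under x = fst (fst x ())"

definition under_comp ::
  "('hp \<times> 'hp, 'hd \<times> 'hd, 'hp, 'hd) pmor
   \<Rightarrow> (unit, unit, 'hp, 'hd) pmor \<Rightarrow> (unit, unit, 'hp, 'hd) pmor \<Rightarrow> (unit, unit, 'hp, 'hd) pmor" where
  "under_comp c x z = pmor_comp (pmor_comp ydiag (dtensor_mor x z)) c"

end

theory Submission
  imports Defs
begin

lemma pos_ctri: "pos (ctri p q) = Sigma (pos p) (\<lambda>i. dir p i \<rightarrow>\<^sub>E pos q)"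
  by (simp add: ctri_def pos_def)
lemma dir_ctri: "dir (ctri p q) (i,f) = Sigma (dir p i) (\<lambda>d. dir q (f d))"
  by (simp add: ctri_def dir_def)
lemma pos_yy[simp]: "pos yy = {()}" and dir_yy[simp]: "dir yy u = {()}"
  by (simp_all add: yy_def pos_def dir_def)
lemma pos_linear[simp]: "pos (linear A) = A" and dir_linear[simp]: "dir (linear A) a = {()}"
  by (simp_all add: linear_def pos_def dir_def)

lemma pmor_eqD: "pmor_eq p q \<phi> \<psi> \<Longrightarrow> i \<in> pos p \<Longrightarrow> fst \<phi> i = fst \<psi> i"
  "pmor_eq p q \<phi> \<psi> \<Longrightarrow> i \<in> pos p \<Longrightarrow> e \<in> dir q (fst \<phi> i) \<Longrightarrow> snd \<phi> i e = snd \<psi> i e"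
  by (auto simp: pmor_eq_def)

lemma mon_eta: assumes "poly_monad t \<eta> \<mu>" shows "fst \<eta> () \<in> pos t"
  using assms by (simp add: poly_monad_def is_pmor_def)

lemma mon_mu: assumes "poly_monad t \<eta> \<mu>" "i \<in> pos t" "\<psi> \<in> dir t i \<rightarrow>\<^sub>E pos t"
  shows "fst \<mu> (i,\<psi>) \<in> pos t"
    "x \<in> dir t (fst \<mu> (i,\<psi>)) \<Longrightarrow> snd \<mu> (i,\<psi>) x \<in> Sigma (dir t i) (\<lambda>d. dir t (\<psi> d))"
  using assms by (auto simp: poly_monad_def is_pmor_def pos_ctri dir_ctri)

lemma mon_lu: assumes "poly_monad t \<eta> \<mu>" "j \<in> pos t"
  shows "fst \<mu> (fst \<eta> (), \<lambda>d\<in>dir t (fst \<eta> ()). j) = j"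
    "x \<in> dir t j \<Longrightarrow> snd (snd \<mu> (fst \<eta> (), \<lambda>d\<in>dir t (fst \<eta> ()). j) x) = x"
proof -
  have P: "((), \<lambda>u\<in>{()}. j) \<in> pos (ctri yy t)" using assms(2) by (simp add: pos_ctri)
  have E: "pmor_eq (ctri yy t) t (pmor_comp (ctri_mor t \<eta> pid) \<mu>) tri_lunit"
    using assms(1) by (simp add: poly_monad_def)
  from pmor_eqD(1)[OF E P] show 1: "fst \<mu> (fst \<eta> (), \<lambda>d\<in>dir t (fst \<eta> ()). j) = j"
    by (simp add: pmor_comp_def ctri_mor_def pid_def tri_lunit_def)
  assume x: "x \<in> dir t j"
  from pmor_eqD(2)[OF E P, of x] x 1 show "snd (snd \<mu> (fst \<eta> (), \<lambda>d\<in>dir t (fst \<eta> ()). j) x) = x"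
    by (simp add: pmor_comp_def ctri_mor_def pid_def tri_lunit_def split_beta)
qed

lemma mon_ru: assumes "poly_monad t \<eta> \<mu>" "i \<in> pos t"
  shows "fst \<mu> (i, \<lambda>d\<in>dir t i. fst \<eta> ()) = i"
    "x \<in> dir t i \<Longrightarrow> fst (snd \<mu> (i, \<lambda>d\<in>dir t i. fst \<eta> ()) x) = x"
proof -
  have P: "(i, \<lambda>d\<in>dir t i. ()) \<in> pos (ctri t yy)" using assms(2) by (simp add: pos_ctri)
  have E: "pmor_eq (ctri t yy) t (pmor_comp (ctri_mor t pid \<eta>) \<mu>) tri_runit"
    using assms(1) by (simp add: poly_monad_def)
  from pmor_eqD(1)[OF E P] show 1: "fst \<mu> (i, \<lambda>d\<in>dir t i. fst \<eta> ()) = i"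
    by (simp add: pmor_comp_def ctri_mor_def pid_def tri_runit_def cong: restrict_cong)
  assume x: "x \<in> dir t i"
  from pmor_eqD(2)[OF E P, of x] x 1 show "fst (snd \<mu> (i, \<lambda>d\<in>dir t i. fst \<eta> ()) x) = x"
    by (simp add: pmor_comp_def ctri_mor_def pid_def tri_runit_def split_beta)
qed
lemma restrict_cong':
  "I = J \<Longrightarrow> (\<And>x. x \<in> J =simp=> f x = g x) \<Longrightarrow> restrict f I = restrict g J"
  by (auto simp: restrict_def simp_implies_def)

lemma mon_as: assumes mon: "poly_monad t \<eta> \<mu>" and i: "i \<in> pos t" and F: "F \<in> dir t i \<rightarrow>\<^sub>E pos t"
  and G: "G \<in> Sigma (dir t i) (\<lambda>d. dir t (F d)) \<rightarrow>\<^sub>E pos t"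
  shows "fst \<mu> (fst \<mu> (i,F), \<lambda>d2\<in>dir t (fst \<mu> (i,F)). G (snd \<mu> (i,F) d2))
       = fst \<mu> (i, \<lambda>d\<in>dir t i. fst \<mu> (F d, \<lambda>e\<in>dir t (F d). G (d,e)))" (is "?L = ?R")
   and "x \<in> dir t (fst \<mu> (i, \<lambda>d\<in>dir t i. fst \<mu> (F d, \<lambda>e\<in>dir t (F d). G (d,e)))) \<Longrightarrow>
     (snd \<mu> (i,F) (fst (snd \<mu> (fst \<mu> (i,F), \<lambda>d2\<in>dir t (fst \<mu> (i,F)). G (snd \<mu> (i,F) d2)) x)),
      snd (snd \<mu> (fst \<mu> (i,F), \<lambda>d2\<in>dir t (fst \<mu> (i,F)). G (snd \<mu> (i,F) d2)) x))
     = (let d = fst (snd \<mu> (i, \<lambda>d\<in>dir t i. fst \<mu> (F d, \<lambda>e\<in>dir t (F d). G (d,e))) x);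
            y = snd (snd \<mu> (i, \<lambda>d\<in>dir t i. fst \<mu> (F d, \<lambda>e\<in>dir t (F d). G (d,e))) x);
            z = snd \<mu> (F d, \<lambda>e\<in>dir t (F d). G (d,e)) y
        in ((d, fst z), snd z))"
proof -
  have P: "((i,F),G) \<in> pos (ctri (ctri t t) t)" using i F G by (simp add: pos_ctri dir_ctri)
  have E: "pmor_eq (ctri (ctri t t) t) t (pmor_comp (ctri_mor t \<mu> pid) \<mu>)
       (pmor_comp (tri_assoc t t) (pmor_comp (ctri_mor t pid \<mu>) \<mu>))"
    using mon by (simp add: poly_monad_def)
  from pmor_eqD(1)[OF E P] show 1: "?L = ?R"
    by (simp add: pmor_comp_def ctri_mor_def pid_def tri_assoc_def cong: restrict_cong')
  assume x: "x \<in> dir t ?R"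
  have M: "(\<lambda>d\<in>dir t i. fst \<mu> (F d, \<lambda>e\<in>dir t (F d). G (d,e))) \<in> dir t i \<rightarrow>\<^sub>E pos t"
  proof
    fix d assume d: "d \<in> dir t i"
    have r: "(\<lambda>e\<in>dir t (F d). G (d,e)) \<in> dir t (F d) \<rightarrow>\<^sub>E pos t" using G d by auto
    have "F d \<in> pos t" using F d by auto
    from mon_mu(1)[OF mon this r] show "(\<lambda>d\<in>dir t i. fst \<mu> (F d, \<lambda>e\<in>dir t (F d). G (d,e))) d \<in> pos t"
      using d by simp
  qed auto
  have xd: "fst (snd \<mu> (i, \<lambda>d\<in>dir t i. fst \<mu> (F d, \<lambda>e\<in>dir t (F d). G (d,e))) x) \<in> dir t i"
    using mon_mu(2)[OF mon i M x] by auto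
  from pmor_eqD(2)[OF E P, of x] x 1 xd show "(snd \<mu> (i,F) (fst (snd \<mu> (fst \<mu> (i,F), \<lambda>d2\<in>dir t (fst \<mu> (i,F)). G (snd \<mu> (i,F) d2)) x)),
      snd (snd \<mu> (fst \<mu> (i,F), \<lambda>d2\<in>dir t (fst \<mu> (i,F)). G (snd \<mu> (i,F) d2)) x))
     = (let d = fst (snd \<mu> (i, \<lambda>d\<in>dir t i. fst \<mu> (F d, \<lambda>e\<in>dir t (F d). G (d,e))) x);
            y = snd (snd \<mu> (i, \<lambda>d\<in>dir t i. fst \<mu> (F d, \<lambda>e\<in>dir t (F d). G (d,e))) x);
            z = snd \<mu> (F d, \<lambda>e\<in>dir t (F d). G (d,e)) y
        in ((d, fst z), snd z))"
    by (simp add: pmor_comp_def ctri_mor_def pid_def tri_assoc_def split_beta Let_def cong: restrict_cong')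
qed


definition bind :: "('i,'d) poly \<Rightarrow> ('i \<times> ('d \<Rightarrow> 'i), 'd \<times> 'd, 'i, 'd) pmor \<Rightarrow> 'i \<times> ('d \<Rightarrow> 'a)
   \<Rightarrow> ('a \<Rightarrow> 'i \<times> ('d \<Rightarrow> 'b)) \<Rightarrow> 'i \<times> ('d \<Rightarrow> 'b)" where
  "bind t \<mu> x k = (fst \<mu> (fst x, \<lambda>d\<in>dir t (fst x). fst (k (snd x d))),
     \<lambda>d'\<in>dir t (fst \<mu> (fst x, \<lambda>d\<in>dir t (fst x). fst (k (snd x d)))).
        snd (k (snd x (fst (snd \<mu> (fst x, \<lambda>d\<in>dir t (fst x). fst (k (snd x d))) d'))))
            (snd (snd \<mu> (fst x, \<lambda>d\<in>dir t (fst x). fst (k (snd x d))) d')))"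

definition bdir where
  "bdir t \<mu> x k d' = snd \<mu> (fst x, \<lambda>d\<in>dir t (fst x). fst (k (snd x d))) d'"

lemma kl_comp_bind: "kl_comp t \<mu> A f g = (\<lambda>a\<in>A. bind t \<mu> (f a) g)"
  unfolding kl_comp_def bind_def by (simp add: Let_def split_beta)

lemma tset_iff: "x \<in> tset t B \<longleftrightarrow> fst x \<in> pos t \<and> snd x \<in> dir t (fst x) \<rightarrow>\<^sub>E B"
  by (cases x) (simp add: tset_def pos_ctri)

lemma fst_bind: "fst (bind t \<mu> x k) = fst \<mu> (fst x, \<lambda>d\<in>dir t (fst x). fst (k (snd x d)))"
  by (simp add: bind_def)

lemma snd_bind: "d' \<in> dir t (fst (bind t \<mu> x k)) \<Longrightarrow>
   snd (bind t \<mu> x k) d' = snd (k (snd x (fst (bdir t \<mu> x k d')))) (snd (bdir t \<mu> x k d'))"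
  by (simp add: bind_def bdir_def)

lemma snd_bind_out: "d' \<notin> dir t (fst (bind t \<mu> x k)) \<Longrightarrow> snd (bind t \<mu> x k) d' = undefined"
  unfolding fst_bind by (simp add: bind_def)

lemma tset_out: "x \<in> tset t B \<Longrightarrow> d \<notin> dir t (fst x) \<Longrightarrow> snd x d = undefined"
  by (simp add: tset_iff PiE_def extensional_def)

lemma psi_wf: assumes "x \<in> tset t B" "k \<in> B \<rightarrow> tset t C"
  shows "(\<lambda>d\<in>dir t (fst x). fst (k (snd x d))) \<in> dir t (fst x) \<rightarrow>\<^sub>E pos t"
  using assms by (auto simp: tset_iff)

lemma bind_wf: assumes mon: "poly_monad t \<eta> \<mu>" and x: "x \<in> tset t B" and k: "k \<in> B \<rightarrow> tset t C"
  shows "d' \<in> dir t (fst (bind t \<mu> x k)) \<Longrightarrow> bdir t \<mu> x k d' \<in> Sigma (dir t (fst x)) (\<lambda>d. dir t (fst (k (snd x d))))"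
    "bind t \<mu> x k \<in> tset t C"
proof -
  have i: "fst x \<in> pos t" using x by (simp add: tset_iff)
  note mm = mon_mu[OF mon i psi_wf[OF x k]]
  show bd: "d' \<in> dir t (fst (bind t \<mu> x k)) \<Longrightarrow> bdir t \<mu> x k d' \<in> Sigma (dir t (fst x)) (\<lambda>d. dir t (fst (k (snd x d))))" for d'
    using mm(2)[of d'] by (auto simp: bdir_def fst_bind)
  show "bind t \<mu> x k \<in> tset t C"
    unfolding tset_iff
  proof
    show "fst (bind t \<mu> x k) \<in> pos t" using mm(1) by (simp add: fst_bind)
    show "snd (bind t \<mu> x k) \<in> dir t (fst (bind t \<mu> x k)) \<rightarrow>\<^sub>E C"
    proof
      fix d' assume d': "d' \<in> dir t (fst (bind t \<mu> x k))"
      from bd[OF d'] have 1: "fst (bdir t \<mu> x k d') \<in> dir t (fst x)"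
        and 2: "snd (bdir t \<mu> x k d') \<in> dir t (fst (k (snd x (fst (bdir t \<mu> x k d')))))" by auto
      have "snd x (fst (bdir t \<mu> x k d')) \<in> B" using 1 x by (auto simp: tset_iff)
      hence "k (snd x (fst (bdir t \<mu> x k d'))) \<in> tset t C" using k by auto
      thus "snd (bind t \<mu> x k) d' \<in> C" using 2 by (auto simp: snd_bind[OF d'] tset_iff)
    next
      fix d' assume "d' \<notin> dir t (fst (bind t \<mu> x k))"
      thus "snd (bind t \<mu> x k) d' = undefined" by (rule snd_bind_out)
    qed
  qed
qed

lemma bind_cong: assumes mon: "poly_monad t \<eta> \<mu>" and x: "x \<in> tset t B" and k: "k \<in> B \<rightarrow> tset t C"
  and eq: "\<And>b. b \<in> B \<Longrightarrow> k b = k' b"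
  shows "bind t \<mu> x k = bind t \<mu> x k'" "bdir t \<mu> x k = bdir t \<mu> x k'"
proof -
  have h: "\<And>d. d \<in> dir t (fst x) \<Longrightarrow> k (snd x d) = k' (snd x d)" using x eq by (auto simp: tset_iff)
  have r: "(\<lambda>d\<in>dir t (fst x). fst (k (snd x d))) = (\<lambda>d\<in>dir t (fst x). fst (k' (snd x d)))"
    using h by (auto simp: restrict_def)
  show bd: "bdir t \<mu> x k = bdir t \<mu> x k'" unfolding bdir_def r ..
  show "bind t \<mu> x k = bind t \<mu> x k'"
  proof (rule prod_eqI)
    show f: "fst (bind t \<mu> x k) = fst (bind t \<mu> x k')" by (simp add: fst_bind r)
    show "snd (bind t \<mu> x k) = snd (bind t \<mu> x k')"
    proof
      fix d'
      show "snd (bind t \<mu> x k) d' = snd (bind t \<mu> x k') d'"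
      proof (cases "d' \<in> dir t (fst (bind t \<mu> x k))")
        case True
        have "fst (bdir t \<mu> x k d') \<in> dir t (fst x)" using bind_wf(1)[OF mon x k True] by auto
        then show ?thesis using True f snd_bind[OF True] snd_bind[of d' t \<mu> x k'] h bd by simp
      next
        case False thus ?thesis using f snd_bind_out[of d' t \<mu> x k] snd_bind_out[of d' t \<mu> x k'] by simp
      qed
    qed
  qed
qed

lemma unit_tset: assumes mon: "poly_monad t \<eta> \<mu>" shows "kl_unit t \<eta> B \<in> B \<rightarrow> tset t B"
  using mon_eta[OF mon] by (auto simp: kl_unit_def tset_iff)

lemma unit_tset': assumes mon: "poly_monad t \<eta> \<mu>" shows "kl_unit t \<eta> B \<in> kl_hom t B B"
  using mon_eta[OF mon] by (auto simp: kl_unit_def tset_iff kl_hom_def)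

lemma bind_lu: assumes mon: "poly_monad t \<eta> \<mu>" and b: "b \<in> B" and k: "k \<in> B \<rightarrow> tset t C"
  shows "bind t \<mu> (kl_unit t \<eta> B b) k = k b"
    "d' \<in> dir t (fst (k b)) \<Longrightarrow> snd (bdir t \<mu> (kl_unit t \<eta> B b) k d') = d'"
proof -
  have kb: "k b \<in> tset t C" using k b by auto
  hence j: "fst (k b) \<in> pos t" by (simp add: tset_iff)
  have psi: "(\<lambda>d\<in>dir t (fst \<eta> ()). fst (k (snd (kl_unit t \<eta> B b) d)))
     = (\<lambda>d\<in>dir t (fst \<eta> ()). fst (k b))" using b by (auto simp: kl_unit_def restrict_def)
  have u: "fst (kl_unit t \<eta> B b) = fst \<eta> ()" using b by (simp add: kl_unit_def)
  have f: "fst (bind t \<mu> (kl_unit t \<eta> B b) k) = fst (k b)"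
    by (simp add: fst_bind psi mon_lu(1)[OF mon j] u)
  show sd: "d' \<in> dir t (fst (k b)) \<Longrightarrow> snd (bdir t \<mu> (kl_unit t \<eta> B b) k d') = d'" for d'
    using mon_lu(2)[OF mon j, of d'] by (simp add: bdir_def psi u)
  have ub: "kl_unit t \<eta> B b \<in> tset t B" using unit_tset[OF mon, of B] b by (rule funcset_mem)
  show "bind t \<mu> (kl_unit t \<eta> B b) k = k b"
  proof (rule prod_eqI)
    show "fst (bind t \<mu> (kl_unit t \<eta> B b) k) = fst (k b)" by (fact f)
    show "snd (bind t \<mu> (kl_unit t \<eta> B b) k) = snd (k b)"
    proof
      fix d'
      show "snd (bind t \<mu> (kl_unit t \<eta> B b) k) d' = snd (k b) d'"
      proof (cases "d' \<in> dir t (fst (k b))")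
        case True
        hence T: "d' \<in> dir t (fst (bind t \<mu> (kl_unit t \<eta> B b) k))" using f by simp
        have "fst (bdir t \<mu> (kl_unit t \<eta> B b) k d') \<in> dir t (fst \<eta> ())"
          using bind_wf(1)[OF mon ub k T] b by (auto simp: kl_unit_def)
        then show ?thesis using snd_bind[OF T] sd[OF True] b by (simp add: kl_unit_def)
      next
        case False thus ?thesis using f snd_bind_out[of d' t \<mu> "kl_unit t \<eta> B b" k] tset_out[OF kb False] by simp
      qed
    qed
  qed
qed

lemma bind_ru: assumes mon: "poly_monad t \<eta> \<mu>" and x: "x \<in> tset t B"
  shows "bind t \<mu> x (kl_unit t \<eta> B) = x"
    "d' \<in> dir t (fst x) \<Longrightarrow> fst (bdir t \<mu> x (kl_unit t \<eta> B) d') = d'"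
proof -
  have i: "fst x \<in> pos t" using x by (simp add: tset_iff)
  have psi: "(\<lambda>d\<in>dir t (fst x). fst (kl_unit t \<eta> B (snd x d))) = (\<lambda>d\<in>dir t (fst x). fst \<eta> ())"
    using x by (intro restrict_ext) (auto simp: kl_unit_def tset_iff)
  have f: "fst (bind t \<mu> x (kl_unit t \<eta> B)) = fst x"
    by (simp add: fst_bind psi mon_ru(1)[OF mon i])
  show sd: "d' \<in> dir t (fst x) \<Longrightarrow> fst (bdir t \<mu> x (kl_unit t \<eta> B) d') = d'" for d'
    using mon_ru(2)[OF mon i, of d'] by (simp add: bdir_def psi)
  show "bind t \<mu> x (kl_unit t \<eta> B) = x"
  proof (rule prod_eqI)
    show "fst (bind t \<mu> x (kl_unit t \<eta> B)) = fst x" by (fact f)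
    show "snd (bind t \<mu> x (kl_unit t \<eta> B)) = snd x"
    proof
      fix d'
      show "snd (bind t \<mu> x (kl_unit t \<eta> B)) d' = snd x d'"
      proof (cases "d' \<in> dir t (fst x)")
        case True
        hence T: "d' \<in> dir t (fst (bind t \<mu> x (kl_unit t \<eta> B)))" using f by simp
        have xb: "snd x d' \<in> B" using True x by (auto simp: tset_iff)
        have ku: "kl_unit t \<eta> B (snd x d') = (fst \<eta> (), \<lambda>d\<in>dir t (fst \<eta> ()). snd x d')"
          using xb by (simp add: kl_unit_def)
        have "snd (bdir t \<mu> x (kl_unit t \<eta> B) d') \<in> dir t (fst (kl_unit t \<eta> B (snd x (fst (bdir t \<mu> x (kl_unit t \<eta> B) d')))))"
          using bind_wf(1)[OF mon x unit_tset[OF mon] T] by auto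
        hence e: "snd (bdir t \<mu> x (kl_unit t \<eta> B) d') \<in> dir t (fst \<eta> ())"
          unfolding sd[OF True] ku by simp
        have "snd (bind t \<mu> x (kl_unit t \<eta> B)) d' = snd (kl_unit t \<eta> B (snd x d')) (snd (bdir t \<mu> x (kl_unit t \<eta> B) d'))"
          using snd_bind[OF T] unfolding sd[OF True] .
        also have "\<dots> = snd x d'" unfolding ku using e by simp
        finally show ?thesis .
      next
        case False thus ?thesis using f snd_bind_out[of d' t \<mu> x "kl_unit t \<eta> B"] tset_out[OF x False] by simp
      qed
    qed
  qed
qed

lemma bind_assoc: assumes mon: "poly_monad t \<eta> \<mu>" and x: "x \<in> tset t B"
  and g: "g \<in> B \<rightarrow> tset t C" and h: "h \<in> C \<rightarrow> tset t D"
  shows "bind t \<mu> (bind t \<mu> x g) h = bind t \<mu> x (\<lambda>b. bind t \<mu> (g b) h)" (is ?A)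
   and "d'' \<in> dir t (fst (bind t \<mu> (bind t \<mu> x g) h)) \<Longrightarrow>
     bdir t \<mu> x g (fst (bdir t \<mu> (bind t \<mu> x g) h d'')) =
       (fst (bdir t \<mu> x (\<lambda>b. bind t \<mu> (g b) h) d''),
        fst (bdir t \<mu> (g (snd x (fst (bdir t \<mu> x (\<lambda>b. bind t \<mu> (g b) h) d'')))) h
                (snd (bdir t \<mu> x (\<lambda>b. bind t \<mu> (g b) h) d'')))) \<and>
     snd (bdir t \<mu> (bind t \<mu> x g) h d'') =
        snd (bdir t \<mu> (g (snd x (fst (bdir t \<mu> x (\<lambda>b. bind t \<mu> (g b) h) d'')))) h
                (snd (bdir t \<mu> x (\<lambda>b. bind t \<mu> (g b) h) d'')))" (is "_ \<Longrightarrow> ?B d''")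
proof -
  define i where "i = fst x"
  define F where "F = (\<lambda>d\<in>dir t i. fst (g (snd x d)))"
  define G where "G = (\<lambda>de\<in>Sigma (dir t i) (\<lambda>d. dir t (F d)). fst (h (snd (g (snd x (fst de))) (snd de))))"
  have i: "i \<in> pos t" using x by (simp add: tset_iff i_def)
  have xB: "\<And>d. d \<in> dir t i \<Longrightarrow> snd x d \<in> B" using x by (auto simp: tset_iff i_def)
  have gx: "\<And>d. d \<in> dir t i \<Longrightarrow> g (snd x d) \<in> tset t C" using xB g by auto
  have F: "F \<in> dir t i \<rightarrow>\<^sub>E pos t" using gx by (auto simp: F_def tset_iff)
  have G: "G \<in> Sigma (dir t i) (\<lambda>d. dir t (F d)) \<rightarrow>\<^sub>E pos t"
  proof -
    { fix d e assume d: "d \<in> dir t i" and e: "e \<in> dir t (F d)"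
      hence "snd (g (snd x d)) e \<in> C" using gx[OF d] by (auto simp: tset_iff F_def)
      hence "fst (h (snd (g (snd x d)) e)) \<in> pos t" using h by (auto simp: tset_iff) }
    thus ?thesis by (auto simp: G_def)
  qed
  have bxg: "bind t \<mu> x g \<in> tset t C" by (rule bind_wf(2)[OF mon x g])
  have k: "(\<lambda>b. bind t \<mu> (g b) h) \<in> B \<rightarrow> tset t D" proof
    fix b assume "b \<in> B" hence "g b \<in> tset t C" using g by auto
    thus "bind t \<mu> (g b) h \<in> tset t D" by (rule bind_wf(2)[OF mon _ h])
  qed
  have m1: "fst (bind t \<mu> x g) = fst \<mu> (i,F)" by (simp add: fst_bind F_def i_def)
  have bd1: "\<And>d2. bdir t \<mu> x g d2 = snd \<mu> (i,F) d2" by (simp add: bdir_def F_def i_def)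
  have I1: "(\<lambda>d'\<in>dir t (fst (bind t \<mu> x g)). fst (h (snd (bind t \<mu> x g) d')))
      = (\<lambda>d2\<in>dir t (fst \<mu> (i,F)). G (snd \<mu> (i,F) d2))"
    unfolding m1
  proof (rule restrict_ext)
    fix d2 assume d2: "d2 \<in> dir t (fst \<mu> (i,F))"
    hence d2': "d2 \<in> dir t (fst (bind t \<mu> x g))" using m1 by simp
    have S: "snd \<mu> (i,F) d2 \<in> Sigma (dir t i) (\<lambda>d. dir t (F d))"
      using bind_wf(1)[OF mon x g d2'] unfolding bd1 F_def i_def by (auto simp: mem_Times_iff)
    show "fst (h (snd (bind t \<mu> x g) d2)) = G (snd \<mu> (i,F) d2)"
      using S by (simp add: snd_bind[OF d2'] bd1 G_def)
  qed
  have I2: "(\<lambda>d\<in>dir t (fst x). fst (bind t \<mu> (g (snd x d)) h))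
     = (\<lambda>d\<in>dir t i. fst \<mu> (F d, \<lambda>e\<in>dir t (F d). G (d,e)))"
    unfolding i_def[symmetric]
  proof (rule restrict_ext)
    fix d assume d: "d \<in> dir t i"
    have "(\<lambda>e\<in>dir t (fst (g (snd x d))). fst (h (snd (g (snd x d)) e))) = (\<lambda>e\<in>dir t (F d). G (d,e))"
      using d by (intro restrict_cong) (auto simp: F_def G_def)
    thus "fst (bind t \<mu> (g (snd x d)) h) = fst \<mu> (F d, \<lambda>e\<in>dir t (F d). G (d,e))"
      using d by (simp add: fst_bind F_def)
  qed
  note AS = mon_as[OF mon i F G]
  have fsteq: "fst (bind t \<mu> (bind t \<mu> x g) h) = fst (bind t \<mu> x (\<lambda>b. bind t \<mu> (g b) h))"
  proof -
    have "fst (bind t \<mu> (bind t \<mu> x g) h) = fst \<mu> (fst (bind t \<mu> x g), \<lambda>d'\<in>dir t (fst (bind t \<mu> x g)). fst (h (snd (bind t \<mu> x g) d')))"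
      by (rule fst_bind)
    also have "\<dots> = fst \<mu> (fst \<mu> (i,F), \<lambda>d2\<in>dir t (fst \<mu> (i,F)). G (snd \<mu> (i,F) d2))"
      using I1 by (simp only: m1)
    also have "\<dots> = fst \<mu> (i, \<lambda>d\<in>dir t i. fst \<mu> (F d, \<lambda>e\<in>dir t (F d). G (d,e)))" by (rule AS(1))
    also have "\<dots> = fst (bind t \<mu> x (\<lambda>b. bind t \<mu> (g b) h))"
      unfolding fst_bind[of t \<mu> x "\<lambda>b. bind t \<mu> (g b) h"] I2 i_def ..
    finally show ?thesis .
  qed
  have fstR: "fst (bind t \<mu> x (\<lambda>b. bind t \<mu> (g b) h)) = fst \<mu> (i, \<lambda>d\<in>dir t i. fst \<mu> (F d, \<lambda>e\<in>dir t (F d). G (d,e)))"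
    unfolding fst_bind[of t \<mu> x "\<lambda>b. bind t \<mu> (g b) h"] I2 i_def ..
  have bdL: "bdir t \<mu> (bind t \<mu> x g) h d'' = snd \<mu> (fst \<mu> (i,F), \<lambda>d2\<in>dir t (fst \<mu> (i,F)). G (snd \<mu> (i,F) d2)) d''" for d''
    unfolding bdir_def using I1 by (simp only: m1)
  have bdR: "bdir t \<mu> x (\<lambda>b. bind t \<mu> (g b) h) d'' = snd \<mu> (i, \<lambda>d\<in>dir t i. fst \<mu> (F d, \<lambda>e\<in>dir t (F d). G (d,e))) d''" for d''
    unfolding bdir_def I2 i_def ..
  have bdI: "bdir t \<mu> (g (snd x p)) h q = snd \<mu> (F p, \<lambda>e\<in>dir t (F p). G (p,e)) q" if p: "p \<in> dir t i" for p q
  proof -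
    have "(\<lambda>e\<in>dir t (fst (g (snd x p))). fst (h (snd (g (snd x p)) e))) = (\<lambda>e\<in>dir t (F p). G (p,e))"
      using p by (intro restrict_cong) (auto simp: F_def G_def)
    thus ?thesis using p by (simp add: bdir_def F_def)
  qed
  have B: "?B d''" if d'': "d'' \<in> dir t (fst (bind t \<mu> (bind t \<mu> x g) h))" for d''
  proof -
    have dR: "d'' \<in> dir t (fst \<mu> (i, \<lambda>d\<in>dir t i. fst \<mu> (F d, \<lambda>e\<in>dir t (F d). G (d,e))))"
      using d'' fsteq fstR by simp
    have dk: "d'' \<in> dir t (fst (bind t \<mu> x (\<lambda>b. bind t \<mu> (g b) h)))" using d'' fsteq by simp
    have p: "fst (bdir t \<mu> x (\<lambda>b. bind t \<mu> (g b) h) d'') \<in> dir t i"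
      using bind_wf(1)[OF mon x k dk] by (auto simp: i_def)
    show ?thesis using AS(2)[OF dR] unfolding bd1 bdL bdR bdI[OF p[unfolded bdR]] 
      by (simp add: Let_def)
  qed
  show ?A
  proof (rule prod_eqI)
    show "fst (bind t \<mu> (bind t \<mu> x g) h) = fst (bind t \<mu> x (\<lambda>b. bind t \<mu> (g b) h))" by (fact fsteq)
    show "snd (bind t \<mu> (bind t \<mu> x g) h) = snd (bind t \<mu> x (\<lambda>b. bind t \<mu> (g b) h))"
    proof
      fix d''
      show "snd (bind t \<mu> (bind t \<mu> x g) h) d'' = snd (bind t \<mu> x (\<lambda>b. bind t \<mu> (g b) h)) d''"
      proof (cases "d'' \<in> dir t (fst (bind t \<mu> (bind t \<mu> x g) h))")
        case True
        note B = B[OF True]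
        have dk: "d'' \<in> dir t (fst (bind t \<mu> x (\<lambda>b. bind t \<mu> (g b) h)))" using True fsteq by simp
        define p where "p = fst (bdir t \<mu> x (\<lambda>b. bind t \<mu> (g b) h) d'')"
        define q where "q = snd (bdir t \<mu> x (\<lambda>b. bind t \<mu> (g b) h) d'')"
        define x1 where "x1 = fst (bdir t \<mu> (bind t \<mu> x g) h d'')"
        have pq: "p \<in> dir t (fst x)" "q \<in> dir t (fst (bind t \<mu> (g (snd x p)) h))"
          using bind_wf(1)[OF mon x k dk] by (auto simp: p_def q_def)
        have x1: "x1 \<in> dir t (fst (bind t \<mu> x g))"
          using bind_wf(1)[OF mon bxg h True] by (auto simp: x1_def)
        have Bf: "bdir t \<mu> x g x1 = (p, fst (bdir t \<mu> (g (snd x p)) h q))"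
          "snd (bdir t \<mu> (bind t \<mu> x g) h d'') = snd (bdir t \<mu> (g (snd x p)) h q)"
          using B unfolding x1_def[symmetric] p_def[symmetric] q_def[symmetric] by auto
        have sk: "snd (bind t \<mu> x (\<lambda>b. bind t \<mu> (g b) h)) d'' = snd (bind t \<mu> (g (snd x p)) h) q"
          using snd_bind[OF dk] unfolding p_def[symmetric] q_def[symmetric] .
        have "snd (bind t \<mu> (bind t \<mu> x g) h) d'' = snd (h (snd (bind t \<mu> x g) x1)) (snd (bdir t \<mu> (bind t \<mu> x g) h d''))"
          using snd_bind[OF True] unfolding x1_def[symmetric] .
        also have "snd (bind t \<mu> x g) x1 = snd (g (snd x p)) (fst (bdir t \<mu> (g (snd x p)) h q))"
          using snd_bind[OF x1] unfolding Bf(1) by simp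
        also have "snd (h (snd (g (snd x p)) (fst (bdir t \<mu> (g (snd x p)) h q)))) (snd (bdir t \<mu> (bind t \<mu> x g) h d''))
            = snd (bind t \<mu> x (\<lambda>b. bind t \<mu> (g b) h)) d''"
          unfolding sk snd_bind[OF pq(2)] Bf(2) ..
        finally show ?thesis .
      next
        case False
        hence "d'' \<notin> dir t (fst (bind t \<mu> x (\<lambda>b. bind t \<mu> (g b) h)))" using fsteq by simp
        with False show ?thesis using snd_bind_out by metis
      qed
    qed
  qed
  show "?B d''" if "d'' \<in> dir t (fst (bind t \<mu> (bind t \<mu> x g) h))" for d'' using B that .
qed

lemma unit_fun1: "(f :: 'x \<Rightarrow> unit) = g" by auto
lemma unit_fun2: "(f :: 'x \<Rightarrow> 'y \<Rightarrow> unit) = g" by (intro ext) simp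

lemma dir_ctri': "dir (ctri p q) z = Sigma (dir p (fst z)) (\<lambda>d. dir q (snd z d))"
  by (cases z) (simp add: dir_ctri)

lemma pos_hT: "\<phi> \<in> pos (hT t A B) \<longleftrightarrow> fst \<phi> \<in> kl_hom t A B"
proof -
  have c: "canon (linear A) (ctri t (linear B)) \<phi> = \<phi> \<longleftrightarrow> restrict (fst \<phi>) A = fst \<phi>"
    unfolding canon_def by (cases \<phi>) (auto intro: unit_fun2)
  have p: "is_pmor (linear A) (ctri t (linear B)) \<phi> \<longleftrightarrow> fst \<phi> \<in> A \<rightarrow> tset t B"
    unfolding is_pmor_def tset_def by auto
  show ?thesis
    unfolding hT_def ihom_def pos_def[of "(_,_)"] fst_conv homset_def mem_Collect_eq c p kl_hom_def
    by (auto simp: PiE_iff extensional_restrict restrict_ext extensional_def restrict_def fun_eq_iff)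
qed

lemma dir_hT: "dir (hT t A B) \<phi> = Sigma A (\<lambda>a. dir t (fst (fst \<phi> a)) \<times> {()})"
  by (simp add: hT_def ihom_def dir_def[of "(_,_)"] dir_ctri')

lemma homset_yy: "x \<in> homset yy h \<longleftrightarrow> fst x () \<in> pos h"
proof -
  have "canon yy h x = x" unfolding canon_def
    by (rule prod_eqI) (auto simp: restrict_def intro: unit_fun2)
  thus ?thesis by (auto simp: homset_def is_pmor_def)
qed

lemma enr_id_pos: assumes "poly_monad t \<eta> \<mu>"
  shows "fst (enr_id t \<eta> A) () = (kl_unit t \<eta> A, \<lambda>_ _. ())"
proof -
  have "restrict (fst (pmor_comp tri_lunit_inv (ctri_mor t \<eta> pid))) A = kl_unit t \<eta> A"
    unfolding kl_unit_def by (intro restrict_ext) (simp add: pmor_comp_def tri_lunit_inv_def ctri_mor_def pid_def)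
  thus ?thesis unfolding enr_id_def canon_def
    by (auto intro: unit_fun2 simp: pos_linear)
qed


definition cc where
 "cc t \<mu> A = (\<lambda>(\<phi>,\<psi>). (kl_comp t \<mu> A (fst \<phi>) (fst \<psi>), \<lambda>_ _. ()),
    \<lambda>(\<phi>,\<psi>) (a,(d',u)). ((a,(fst (bdir t \<mu> (fst \<phi> a) (fst \<psi>) d'),())),
        (snd (fst \<phi> a) (fst (bdir t \<mu> (fst \<phi> a) (fst \<psi>) d')), (snd (bdir t \<mu> (fst \<phi> a) (fst \<psi>) d'), ()))))"

lemma fst_cc: "fst (cc t \<mu> A) (\<phi>,\<psi>) = (kl_comp t \<mu> A (fst \<phi>) (fst \<psi>), \<lambda>_ _. ())"
  by (simp add: cc_def)
lemma snd_cc: "snd (cc t \<mu> A) (\<phi>,\<psi>) (a,(d',u)) = ((a,(fst (bdir t \<mu> (fst \<phi> a) (fst \<psi>) d'),())),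
        (snd (fst \<phi> a) (fst (bdir t \<mu> (fst \<phi> a) (fst \<psi>) d')), (snd (bdir t \<mu> (fst \<phi> a) (fst \<psi>) d'), ())))"
  by (simp add: cc_def)

lemma pos_dtensor: "pos (dtensor p q) = pos p \<times> pos q"
  by (simp add: dtensor_def pos_def)
lemma dir_dtensor: "dir (dtensor p q) (i,j) = dir p i \<times> dir q j"
  by (simp add: dtensor_def dir_def)

lemma kl_homD: "f \<in> kl_hom t A B \<Longrightarrow> a \<in> A \<Longrightarrow> f a \<in> tset t B"
  "f \<in> kl_hom t A B \<Longrightarrow> f \<in> A \<rightarrow> tset t B"
  by (auto simp: kl_hom_def)

lemma kl_comp_hom: assumes mon: "poly_monad t \<eta> \<mu>" and f: "f \<in> kl_hom t A B" and g: "g \<in> kl_hom t B C"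
  shows "kl_comp t \<mu> A f g \<in> kl_hom t A C"
  unfolding kl_comp_bind kl_hom_def
  using bind_wf(2)[OF mon kl_homD(1)[OF f] kl_homD(2)[OF g]] by auto

lemma cc_pmor: assumes mon: "poly_monad t \<eta> \<mu>"
  shows "is_pmor (dtensor (hT t A B) (hT t B C)) (hT t A C) (cc t \<mu> A)"
  unfolding is_pmor_def pos_dtensor
proof (clarify)
  fix \<phi> \<psi> assume \<phi>: "\<phi> \<in> pos (hT t A B)" and \<psi>: "\<psi> \<in> pos (hT t B C)"
  have f: "fst \<phi> \<in> kl_hom t A B" and g: "fst \<psi> \<in> kl_hom t B C" using \<phi> \<psi> by (auto simp: pos_hT)
  show "fst (cc t \<mu> A) (\<phi>, \<psi>) \<in> pos (hT t A C) \<and>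
       (\<forall>e\<in>dir (hT t A C) (fst (cc t \<mu> A) (\<phi>, \<psi>)). snd (cc t \<mu> A) (\<phi>, \<psi>) e \<in> dir (dtensor (hT t A B) (hT t B C)) (\<phi>, \<psi>))"
  proof
    show "fst (cc t \<mu> A) (\<phi>, \<psi>) \<in> pos (hT t A C)"
      by (simp add: fst_cc pos_hT kl_comp_hom[OF mon f g])
    show "\<forall>e\<in>dir (hT t A C) (fst (cc t \<mu> A) (\<phi>, \<psi>)). snd (cc t \<mu> A) (\<phi>, \<psi>) e \<in> dir (dtensor (hT t A B) (hT t B C)) (\<phi>, \<psi>)"
    proof (clarsimp simp: dir_hT fst_cc dir_dtensor snd_cc)
      fix a d' assume a: "a \<in> A" and d': "d' \<in> dir t (fst (kl_comp t \<mu> A (fst \<phi>) (fst \<psi>) a))"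
      have fa: "fst \<phi> a \<in> tset t B" using kl_homD(1)[OF f a] .
      have d'': "d' \<in> dir t (fst (bind t \<mu> (fst \<phi> a) (fst \<psi>)))" using d' a by (simp add: kl_comp_bind)
      note bw = bind_wf(1)[OF mon fa kl_homD(2)[OF g] d'']
      have "snd (fst \<phi> a) (fst (bdir t \<mu> (fst \<phi> a) (fst \<psi>) d')) \<in> B"
        using fa bw by (auto simp: tset_iff)
      then show "fst (bdir t \<mu> (fst \<phi> a) (fst \<psi>) d') \<in> dir t (fst (fst \<phi> a)) \<and>
           snd (fst \<phi> a) (fst (bdir t \<mu> (fst \<phi> a) (fst \<psi>) d')) \<in> B \<and>
           snd (bdir t \<mu> (fst \<phi> a) (fst \<psi>) d') \<in> dir t (fst (fst \<psi> (snd (fst \<phi> a) (fst (bdir t \<mu> (fst \<phi> a) (fst \<psi>) d')))))"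
        using bw by auto
    qed
  qed
qed

lemma enr_pmor: assumes mon: "poly_monad t \<eta> \<mu>" shows "is_pmor yy (hT t A A) (enr_id t \<eta> A)"
  unfolding is_pmor_def using unit_tset'[OF mon, of A] by (simp add: pos_hT enr_id_pos[OF mon, of A])

lemma hT_pos_eq: "(\<phi> :: ('a \<Rightarrow> 'q) \<times> ('a \<Rightarrow> 'e \<Rightarrow> unit)) = (fst \<phi>, \<lambda>_ _. ())"
  by (rule prod_eqI) (auto intro: unit_fun2)

lemma under_bij: "bij_betw under (homset yy (hT t A B)) (kl_hom t A B)"
proof (rule bij_betwI')
  fix x y assume x: "x \<in> homset yy (hT t A B)" and y: "y \<in> homset yy (hT t A B)"
  show "(under x = under y) = (x = y)"
  proof
    assume u: "under x = under y"
    have "fst x () = fst y ()" using u hT_pos_eq[of "fst x ()"] hT_pos_eq[of "fst y ()"] by (simp add: under_def)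
    hence "fst x = fst y" by (intro ext) simp
    moreover have "snd x = snd y" by (intro unit_fun2)
    ultimately show "x = y" by (rule prod_eqI)
  qed simp
next
  fix x assume "x \<in> homset yy (hT t A B)"
  thus "under x \<in> kl_hom t A B" by (simp add: homset_yy pos_hT under_def)
next
  fix f assume f: "f \<in> kl_hom t A B"
  let ?x = "(\<lambda>_::unit. (f, \<lambda>(_::'a) (_::'d \<times> unit). ()), \<lambda>(_::unit) (_::'a \<times> 'd \<times> unit). ())"
  have "?x \<in> homset yy (hT t A B)" using f by (simp add: homset_yy pos_hT)
  moreover have "f = under ?x" by (simp add: under_def)
  ultimately show "\<exists>x\<in>homset yy (hT t A B). f = under x" by blast
qed

lemma under_enr: assumes mon: "poly_monad t \<eta> \<mu>" shows "under (enr_id t \<eta> A) = kl_unit t \<eta> A"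
  unfolding under_def enr_id_pos[OF mon, of A] by simp

lemma under_cc: "under (under_comp (cc t \<mu> A) x z) = kl_comp t \<mu> A (under x) (under z)"
  by (simp add: under_def under_comp_def pmor_comp_def ydiag_def dtensor_mor_def fst_cc)


lemma fst_pc: "fst (pmor_comp \<phi> \<psi>) i = fst \<psi> (fst \<phi> i)" by (simp add: pmor_comp_def)
lemma snd_pc: "snd (pmor_comp \<phi> \<psi>) i x = snd \<phi> i (snd \<psi> (fst \<phi> i) x)" by (simp add: pmor_comp_def)
lemma fst_dm: "fst (dtensor_mor \<phi> \<psi>) (i,j) = (fst \<phi> i, fst \<psi> j)" by (simp add: dtensor_mor_def)
lemma snd_dm: "snd (dtensor_mor \<phi> \<psi>) (i,j) (d,e) = (snd \<phi> i d, snd \<psi> j e)" by (simp add: dtensor_mor_def)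
lemma pid_simps: "fst pid i = i" "snd pid i d = d" by (simp_all add: pid_def)
lemma dlunit_simps: "fst dlunit (u,i) = i" "snd dlunit x d = ((),d)" by (simp_all add: dlunit_def)
lemma drunit_simps: "fst drunit (i,u) = i" "snd drunit x d = (d,())" by (simp_all add: drunit_def)
lemma dassoc_simps: "fst dassoc ((i,j),k) = (i,(j,k))" "snd dassoc x (d,(e,f)) = ((d,e),f)" by (simp_all add: dassoc_def)
lemmas msimps = fst_pc snd_pc fst_dm snd_dm pid_simps dlunit_simps drunit_simps dassoc_simps fst_cc snd_cc

lemma kl_lu: assumes mon: "poly_monad t \<eta> \<mu>" and f: "f \<in> kl_hom t A B"
  shows "kl_comp t \<mu> A (kl_unit t \<eta> A) f = f"
  unfolding kl_comp_bind
proof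
  fix a show "(\<lambda>a\<in>A. bind t \<mu> (kl_unit t \<eta> A a) f) a = f a"
    using bind_lu(1)[OF mon _ kl_homD(2)[OF f], of a] f by (auto simp: kl_hom_def PiE_def extensional_def)
qed

lemma kl_ru: assumes mon: "poly_monad t \<eta> \<mu>" and f: "f \<in> kl_hom t A B"
  shows "kl_comp t \<mu> A f (kl_unit t \<eta> B) = f"
  unfolding kl_comp_bind
proof
  fix a show "(\<lambda>a\<in>A. bind t \<mu> (f a) (kl_unit t \<eta> B)) a = f a"
    using bind_ru(1)[OF mon kl_homD(1)[OF f], of a] f by (auto simp: kl_hom_def PiE_def extensional_def)
qed

lemma lunit_law: assumes mon: "poly_monad t \<eta> \<mu>"
  shows "pmor_eq (dtensor yy (hT t A B)) (hT t A B)
          (pmor_comp (dtensor_mor (enr_id t \<eta> A) pid) (cc t \<mu> A)) dlunit"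
  unfolding pmor_eq_def pos_dtensor
proof (clarify)
  fix u \<phi>
  assume \<phi>: "\<phi> \<in> pos (hT t A B)"
  have f: "fst \<phi> \<in> kl_hom t A B" using \<phi> by (simp add: pos_hT)
  have F: "fst (pmor_comp (dtensor_mor (enr_id t \<eta> A) pid) (cc t \<mu> A)) ((),\<phi>) = \<phi>"
    apply (simp add: msimps enr_id_pos[OF mon] kl_lu[OF mon f])
    using hT_pos_eq[of \<phi>] by simp
  show "fst (pmor_comp (dtensor_mor (enr_id t \<eta> A) pid) (cc t \<mu> A)) ((),\<phi>) = fst dlunit ((),\<phi>) \<and>
       (\<forall>e\<in>dir (hT t A B) (fst (pmor_comp (dtensor_mor (enr_id t \<eta> A) pid) (cc t \<mu> A)) ((),\<phi>)).
           snd (pmor_comp (dtensor_mor (enr_id t \<eta> A) pid) (cc t \<mu> A)) ((),\<phi>) e = snd dlunit ((),\<phi>) e)"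
  proof (intro conjI ballI)
    show "fst (pmor_comp (dtensor_mor (enr_id t \<eta> A) pid) (cc t \<mu> A)) ((),\<phi>) = fst dlunit ((),\<phi>)"
      using F by (simp add: dlunit_simps)
    fix e assume "e \<in> dir (hT t A B) (fst (pmor_comp (dtensor_mor (enr_id t \<eta> A) pid) (cc t \<mu> A)) ((),\<phi>))"
    then obtain a d' where e: "e = (a,(d',()))" and a: "a \<in> A" and d': "d' \<in> dir t (fst (fst \<phi> a))"
      unfolding F dir_hT by auto
    have ua: "kl_unit t \<eta> A a = (fst \<eta> (), \<lambda>d\<in>dir t (fst \<eta> ()). a)" using a by (simp add: kl_unit_def)
    have uat: "kl_unit t \<eta> A a \<in> tset t A" using unit_tset[OF mon, of A] a by (rule funcset_mem)
    have fa: "d' \<in> dir t (fst (bind t \<mu> (kl_unit t \<eta> A a) (fst \<phi>)))"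
      using d' bind_lu(1)[OF mon a kl_homD(2)[OF f]] by simp
    have p: "fst (bdir t \<mu> (kl_unit t \<eta> A a) (fst \<phi>) d') \<in> dir t (fst \<eta> ())"
      using bind_wf(1)[OF mon uat kl_homD(2)[OF f] fa] ua by auto
    have q: "snd (bdir t \<mu> (kl_unit t \<eta> A a) (fst \<phi>) d') = d'" by (rule bind_lu(2)[OF mon a kl_homD(2)[OF f] d'])
    show "snd (pmor_comp (dtensor_mor (enr_id t \<eta> A) pid) (cc t \<mu> A)) ((),\<phi>) e = snd dlunit ((),\<phi>) e"
      unfolding e using p q ua by (simp add: msimps enr_id_pos[OF mon])
  qed
qed

lemma runit_law: assumes mon: "poly_monad t \<eta> \<mu>"
  shows "pmor_eq (dtensor (hT t A B) yy) (hT t A B)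
          (pmor_comp (dtensor_mor pid (enr_id t \<eta> B)) (cc t \<mu> A)) drunit"
  unfolding pmor_eq_def pos_dtensor
proof (clarify)
  fix u \<phi>
  assume \<phi>: "\<phi> \<in> pos (hT t A B)"
  have f: "fst \<phi> \<in> kl_hom t A B" using \<phi> by (simp add: pos_hT)
  have F: "fst (pmor_comp (dtensor_mor pid (enr_id t \<eta> B)) (cc t \<mu> A)) (\<phi>,()) = \<phi>"
    apply (simp add: msimps enr_id_pos[OF mon] kl_ru[OF mon f])
    using hT_pos_eq[of \<phi>] by simp
  show "fst (pmor_comp (dtensor_mor pid (enr_id t \<eta> B)) (cc t \<mu> A)) (\<phi>,()) = fst drunit (\<phi>,()) \<and>
       (\<forall>e\<in>dir (hT t A B) (fst (pmor_comp (dtensor_mor pid (enr_id t \<eta> B)) (cc t \<mu> A)) (\<phi>,())).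
           snd (pmor_comp (dtensor_mor pid (enr_id t \<eta> B)) (cc t \<mu> A)) (\<phi>,()) e = snd drunit (\<phi>,()) e)"
  proof (intro conjI ballI)
    show "fst (pmor_comp (dtensor_mor pid (enr_id t \<eta> B)) (cc t \<mu> A)) (\<phi>,()) = fst drunit (\<phi>,())"
      using F by (simp add: drunit_simps)
    fix e assume "e \<in> dir (hT t A B) (fst (pmor_comp (dtensor_mor pid (enr_id t \<eta> B)) (cc t \<mu> A)) (\<phi>,()))"
    then obtain a d' where e: "e = (a,(d',()))" and a: "a \<in> A" and d': "d' \<in> dir t (fst (fst \<phi> a))"
      unfolding F dir_hT by auto
    have p: "fst (bdir t \<mu> (fst \<phi> a) (kl_unit t \<eta> B) d') = d'"
      by (rule bind_ru(2)[OF mon kl_homD(1)[OF f a] d'])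
    show "snd (pmor_comp (dtensor_mor pid (enr_id t \<eta> B)) (cc t \<mu> A)) (\<phi>,()) e = snd drunit (\<phi>,()) e"
      unfolding e using p by (simp add: msimps enr_id_pos[OF mon])
  qed
qed

lemma kl_K: assumes mon: "poly_monad t \<eta> \<mu>" and g: "g \<in> kl_hom t B C" and h: "h \<in> kl_hom t C D"
  shows "(\<lambda>b. bind t \<mu> (g b) h) \<in> B \<rightarrow> tset t D"
  using bind_wf(2)[OF mon kl_homD(1)[OF g] kl_homD(2)[OF h]] by auto

lemma kl_assoc: assumes mon: "poly_monad t \<eta> \<mu>" and f: "f \<in> kl_hom t A B" and g: "g \<in> kl_hom t B C" and h: "h \<in> kl_hom t C D"
  shows "kl_comp t \<mu> A (kl_comp t \<mu> A f g) h = kl_comp t \<mu> A f (kl_comp t \<mu> B g h)"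
    "a \<in> A \<Longrightarrow> bdir t \<mu> (f a) (kl_comp t \<mu> B g h) = bdir t \<mu> (f a) (\<lambda>b. bind t \<mu> (g b) h)"
proof -
  note K = kl_K[OF mon g h]
  show "a \<in> A \<Longrightarrow> bdir t \<mu> (f a) (kl_comp t \<mu> B g h) = bdir t \<mu> (f a) (\<lambda>b. bind t \<mu> (g b) h)" for a
    unfolding kl_comp_bind by (rule bind_cong(2)[OF mon kl_homD(1)[OF f] K, symmetric]) (auto simp: restrict_def)
  show "kl_comp t \<mu> A (kl_comp t \<mu> A f g) h = kl_comp t \<mu> A f (kl_comp t \<mu> B g h)"
    unfolding kl_comp_bind
  proof (rule restrict_ext)
    fix a assume a: "a \<in> A"
    have "bind t \<mu> ((\<lambda>a\<in>A. bind t \<mu> (f a) g) a) h = bind t \<mu> (bind t \<mu> (f a) g) h" using a by simp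
    also have "\<dots> = bind t \<mu> (f a) (\<lambda>b. bind t \<mu> (g b) h)"
      by (rule bind_assoc(1)[OF mon kl_homD(1)[OF f a] kl_homD(2)[OF g] kl_homD(2)[OF h]])
    also have "\<dots> = bind t \<mu> (f a) (\<lambda>b\<in>B. bind t \<mu> (g b) h)"
      by (rule bind_cong(1)[OF mon kl_homD(1)[OF f a] K]) (auto simp: restrict_def)
    finally show "bind t \<mu> ((\<lambda>a\<in>A. bind t \<mu> (f a) g) a) h = bind t \<mu> (f a) (\<lambda>b\<in>B. bind t \<mu> (g b) h)" .
  qed
qed

lemma assoc_law: assumes mon: "poly_monad t \<eta> \<mu>"
  shows "pmor_eq (dtensor (dtensor (hT t A B) (hT t B C)) (hT t C D)) (hT t A D)
          (pmor_comp (dtensor_mor (cc t \<mu> A) pid) (cc t \<mu> A))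
          (pmor_comp dassoc (pmor_comp (dtensor_mor pid (cc t \<mu> B)) (cc t \<mu> A)))"
  unfolding pmor_eq_def pos_dtensor
proof (clarify)
  fix \<phi> \<psi> \<chi>
  assume \<phi>: "\<phi> \<in> pos (hT t A B)" and \<psi>: "\<psi> \<in> pos (hT t B C)" and \<chi>: "\<chi> \<in> pos (hT t C D)"
  define f where "f = fst \<phi>"
  define g where "g = fst \<psi>"
  define h where "h = fst \<chi>"
  have f: "f \<in> kl_hom t A B" and g: "g \<in> kl_hom t B C" and h: "h \<in> kl_hom t C D"
    using \<phi> \<psi> \<chi> by (auto simp: pos_hT f_def g_def h_def)
  have FL: "fst (pmor_comp (dtensor_mor (cc t \<mu> A) pid) (cc t \<mu> A)) ((\<phi>,\<psi>),\<chi>) = (kl_comp t \<mu> A (kl_comp t \<mu> A f g) h, \<lambda>_ _. ())"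
    by (simp add: msimps f_def g_def h_def)
  have FR: "fst (pmor_comp dassoc (pmor_comp (dtensor_mor pid (cc t \<mu> B)) (cc t \<mu> A))) ((\<phi>,\<psi>),\<chi>) = (kl_comp t \<mu> A f (kl_comp t \<mu> B g h), \<lambda>_ _. ())"
    by (simp add: msimps f_def g_def h_def)
  show "fst (pmor_comp (dtensor_mor (cc t \<mu> A) pid) (cc t \<mu> A)) ((\<phi>,\<psi>),\<chi>) = fst (pmor_comp dassoc (pmor_comp (dtensor_mor pid (cc t \<mu> B)) (cc t \<mu> A))) ((\<phi>,\<psi>),\<chi>) \<and>
    (\<forall>e\<in>dir (hT t A D) (fst (pmor_comp (dtensor_mor (cc t \<mu> A) pid) (cc t \<mu> A)) ((\<phi>,\<psi>),\<chi>)). snd (pmor_comp (dtensor_mor (cc t \<mu> A) pid) (cc t \<mu> A)) ((\<phi>,\<psi>),\<chi>) e = snd (pmor_comp dassoc (pmor_comp (dtensor_mor pid (cc t \<mu> B)) (cc t \<mu> A))) ((\<phi>,\<psi>),\<chi>) e)"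
  proof (intro conjI ballI)
    show "fst (pmor_comp (dtensor_mor (cc t \<mu> A) pid) (cc t \<mu> A)) ((\<phi>,\<psi>),\<chi>) = fst (pmor_comp dassoc (pmor_comp (dtensor_mor pid (cc t \<mu> B)) (cc t \<mu> A))) ((\<phi>,\<psi>),\<chi>)" unfolding FL FR kl_assoc(1)[OF mon f g h] ..
    fix e assume "e \<in> dir (hT t A D) (fst (pmor_comp (dtensor_mor (cc t \<mu> A) pid) (cc t \<mu> A)) ((\<phi>,\<psi>),\<chi>))"
    then obtain a d'' where e: "e = (a,(d'',()))" and a: "a \<in> A"
        and d0: "d'' \<in> dir t (fst (kl_comp t \<mu> A (kl_comp t \<mu> A f g) h a))"
      unfolding FL dir_hT by auto
    have E1: "kl_comp t \<mu> A f g a = bind t \<mu> (f a) g" using a by (simp add: kl_comp_bind)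
    have d'': "d'' \<in> dir t (fst (bind t \<mu> (bind t \<mu> (f a) g) h))" using d0 a by (simp add: kl_comp_bind)
    note E2 = kl_assoc(2)[OF mon f g h a]
    note BA = bind_assoc(2)[OF mon kl_homD(1)[OF f a] kl_homD(2)[OF g] kl_homD(2)[OF h] d'']
    have x1: "fst (bdir t \<mu> (bind t \<mu> (f a) g) h d'') \<in> dir t (fst (bind t \<mu> (f a) g))"
      using bind_wf(1)[OF mon bind_wf(2)[OF mon kl_homD(1)[OF f a] kl_homD(2)[OF g]] kl_homD(2)[OF h] d''] by auto
    show "snd (pmor_comp (dtensor_mor (cc t \<mu> A) pid) (cc t \<mu> A)) ((\<phi>,\<psi>),\<chi>) e = snd (pmor_comp dassoc (pmor_comp (dtensor_mor pid (cc t \<mu> B)) (cc t \<mu> A))) ((\<phi>,\<psi>),\<chi>) e"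
      unfolding e
      apply (simp add: msimps f_def[symmetric] g_def[symmetric] h_def[symmetric] E1 E2 snd_bind[OF x1])
      using BA by simp
  qed
qed

theorem mainTheorem1:
  fixes t :: "('i,'d) poly"
    and \<eta> :: "(unit, unit, 'i, 'd) pmor"
    and \<mu> :: "('i \<times> ('d \<Rightarrow> 'i), 'd \<times> 'd, 'i, 'd) pmor"
  assumes "poly_monad t \<eta> \<mu>"
  shows "\<exists>c :: 'a set \<Rightarrow> 'a set \<Rightarrow> 'a set \<Rightarrow> _.
     (\<forall>A B C. is_pmor (dtensor (hT t A B) (hT t B C)) (hT t A C) (c A B C))
   \<and> (\<forall>A::'a set. is_pmor yy (hT t A A) (enr_id t \<eta> A))
   \<and> (\<forall>A B C D. pmor_eq (dtensor (dtensor (hT t A B) (hT t B C)) (hT t C D)) (hT t A D)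
          (pmor_comp (dtensor_mor (c A B C) pid) (c A C D))
          (pmor_comp dassoc (pmor_comp (dtensor_mor pid (c B C D)) (c A B D))))
   \<and> (\<forall>A B. pmor_eq (dtensor yy (hT t A B)) (hT t A B)
          (pmor_comp (dtensor_mor (enr_id t \<eta> A) pid) (c A A B)) dlunit)
   \<and> (\<forall>A B. pmor_eq (dtensor (hT t A B) yy) (hT t A B)
          (pmor_comp (dtensor_mor pid (enr_id t \<eta> B)) (c A B B)) drunit)
   \<and> (\<forall>A B::'a set. bij_betw under (homset yy (hT t A B)) (kl_hom t A B))
   \<and> (\<forall>A::'a set. under (enr_id t \<eta> A) = kl_unit t \<eta> A)
   \<and> (\<forall>A B C x z. x \<in> homset yy (hT t A B) \<longrightarrow> z \<in> homset yy (hT t B C) \<longrightarrow>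
          under (under_comp (c A B C) x z) = kl_comp t \<mu> A (under x) (under z))"
proof (rule exI[of _ "\<lambda>A B C. cc t \<mu> A"], intro conjI allI impI)
  note mon = assms
  show "is_pmor (dtensor (hT t A B) (hT t B C)) (hT t A C) (cc t \<mu> A)" for A B C :: "'a set"
    by (rule cc_pmor[OF mon])
  show "is_pmor yy (hT t A A) (enr_id t \<eta> A)" for A :: "'a set" by (rule enr_pmor[OF mon])
  show "pmor_eq (dtensor (dtensor (hT t A B) (hT t B C)) (hT t C D)) (hT t A D)
          (pmor_comp (dtensor_mor (cc t \<mu> A) pid) (cc t \<mu> A))
          (pmor_comp dassoc (pmor_comp (dtensor_mor pid (cc t \<mu> B)) (cc t \<mu> A)))" for A B C D :: "'a set"
    by (rule assoc_law[OF mon])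
  show "pmor_eq (dtensor yy (hT t A B)) (hT t A B)
          (pmor_comp (dtensor_mor (enr_id t \<eta> A) pid) (cc t \<mu> A)) dlunit" for A B :: "'a set"
    by (rule lunit_law[OF mon])
  show "pmor_eq (dtensor (hT t A B) yy) (hT t A B)
          (pmor_comp (dtensor_mor pid (enr_id t \<eta> B)) (cc t \<mu> A)) drunit" for A B :: "'a set"
    by (rule runit_law[OF mon])
  show "bij_betw under (homset yy (hT t A B)) (kl_hom t A B)" for A B :: "'a set"
    by (rule under_bij)
  show "under (enr_id t \<eta> A) = kl_unit t \<eta> A" for A :: "'a set" by (rule under_enr[OF mon])
  show "under (under_comp (cc t \<mu> A) x z) = kl_comp t \<mu> A (under x) (under z)" for A B C :: "'a set" and x z
    by (rule under_cc)
qed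

end
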